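(* Let $p$ be a prime with $p\equiv 1$ or $7\pmod 8$, and let $\mathfrak{p}$ be a prime ideal of $\mathbb{Z}[\sqrt2]$ lying over $p$. Let $(a_p,b_p)$ be the solution of $a^2-2b^2=p$ in positive integers with $a_p$ minimal. Then $$\lambda_1\big(\Sigma_{\mathbb{Q}(\sqrt2)}(\mathfrak{p})\big)=\sqrt{2}\,\min\left(\sqrt{2a_p^2-p},\ \sqrt{6a_p^2-4\sqrt2\,a_p\sqrt{a_p^2-p}-3p}\right).$$
   Context: The canonical embedding of $\mathbb{Q}(\sqrt2)$ is $\Sigma_{\mathbb{Q}(\sqrt2)}(x)=(x,\tau(x))$, where $\tau(\sqrt2)=-\sqrt2$, with $\|\Sigma_{\mathbb{Q}(\sqrt2)}(x)\|^2=x^2+\tau(x)^2$. For a nonzero ideal $I$, $\lambda_1(\Sigma_{\mathbb{Q}(\sqrt2)}(I))=\min_{0\ne x\in I}\|\Sigma_{\mathbb{Q}(\sqrt2)}(x)\|$. *)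

theory Defs
  imports Complex_Main "HOL-Computational_Algebra.Primes"
begin

text \<open>Elements of \<open>\<int>[\<surd>2]\<close> are represented as pairs (x, y) standing for x + y\<surd>2.\<close>

type_synonym zsqrt2 = "int \<times> int"

definition zs_mult :: "zsqrt2 \<Rightarrow> zsqrt2 \<Rightarrow> zsqrt2" where
  "zs_mult u v = (fst u * fst v + 2 * snd u * snd v, fst u * snd v + snd u * fst v)"

definition zs_add :: "zsqrt2 \<Rightarrow> zsqrt2 \<Rightarrow> zsqrt2" where
  "zs_add u v = (fst u + fst v, snd u + snd v)"

definition zs_ideal :: "zsqrt2 set \<Rightarrow> bool" where
  "zs_ideal I \<longleftrightarrow> (0, 0) \<in> I \<and> (\<forall>u\<in>I. \<forall>v\<in>I. zs_add u v \<in> I)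
     \<and> (\<forall>r. \<forall>u\<in>I. zs_mult r u \<in> I)"

definition zs_prime_ideal :: "zsqrt2 set \<Rightarrow> bool" where
  "zs_prime_ideal P \<longleftrightarrow> zs_ideal P \<and> P \<noteq> UNIV
     \<and> (\<forall>u v. zs_mult u v \<in> P \<longrightarrow> u \<in> P \<or> v \<in> P)"

definition lies_over :: "zsqrt2 set \<Rightarrow> int \<Rightarrow> bool" where
  "lies_over P p \<longleftrightarrow> {n. (n, 0) \<in> P} = {n. p dvd n}"

definition canon_emb :: "zsqrt2 \<Rightarrow> real \<times> real" where
  "canon_emb u = (of_int (fst u) + of_int (snd u) * sqrt 2, of_int (fst u) - of_int (snd u) * sqrt 2)"

definition emb_norm :: "zsqrt2 \<Rightarrow> real" where
  "emb_norm u = sqrt ((fst (canon_emb u))\<^sup>2 + (snd (canon_emb u))\<^sup>2)"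

definition lambda1 :: "zsqrt2 set \<Rightarrow> real" where
  "lambda1 I = Inf {emb_norm u | u. u \<in> I \<and> u \<noteq> (0, 0)}"

definition a_min :: "int \<Rightarrow> int" where
  "a_min p = (LEAST a::int. a > 0 \<and> (\<exists>b::int. b > 0 \<and> a\<^sup>2 - 2 * b\<^sup>2 = p))"

end

theory Submission
  imports Defs "HOL-Number_Theory.Gauss"
begin

definition zN :: "zsqrt2 \<Rightarrow> int" where "zN u = (fst u)^2 - 2 * (snd u)^2"
definition zQ :: "zsqrt2 \<Rightarrow> int" where "zQ u = (fst u)^2 + 2 * (snd u)^2"
definition zconj :: "zsqrt2 \<Rightarrow> zsqrt2" where "zconj u = (fst u, - snd u)"

lemma zs_mult_comm: "zs_mult u v = zs_mult v u"
  by (simp add: zs_mult_def algebra_simps)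
lemma zs_mult_assoc: "zs_mult (zs_mult u v) w = zs_mult u (zs_mult v w)"
  by (simp add: zs_mult_def algebra_simps)
lemma zs_mult_1[simp]: "zs_mult (1,0) u = u" "zs_mult u (1,0) = u"
  by (simp_all add: zs_mult_def)
lemma zs_mult_0[simp]: "zs_mult (0,0) u = (0,0)" "zs_mult u (0,0) = (0,0)"
  by (simp_all add: zs_mult_def)
lemma zN_mult: "zN (zs_mult u v) = zN u * zN v"
  by (simp add: zN_def zs_mult_def power2_eq_square algebra_simps)
lemma zconj_mult: "zconj (zs_mult u v) = zs_mult (zconj u) (zconj v)"
  by (simp add: zconj_def zs_mult_def)
lemma zQ_conj[simp]: "zQ (zconj u) = zQ u" by (simp add: zQ_def zconj_def)
lemma zN_conj[simp]: "zN (zconj u) = zN u" by (simp add: zN_def zconj_def)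
lemma zconj_conj[simp]: "zconj (zconj u) = u" by (simp add: zconj_def)
lemma zconj_0_iff[simp]: "zconj u = (0,0) \<longleftrightarrow> u = (0,0)" by (cases u, auto simp: zconj_def)
lemma mult_conj: "zs_mult u (zconj u) = (zN u, 0)"
  by (simp add: zs_mult_def zconj_def zN_def power2_eq_square)
lemma zQ_ge_zN: "\<bar>zN u\<bar> \<le> zQ u"
proof -
  have "0 \<le> (fst u)^2" "0 \<le> (snd u)^2" by simp_all
  then show ?thesis by (simp add: zN_def zQ_def abs_le_iff)
qed
lemma zQ_nonneg: "0 \<le> zQ u" by (simp add: zQ_def)
lemma zQ_pos: "u \<noteq> (0,0) \<Longrightarrow> 0 < zQ u"
  by (cases u) (auto simp: zQ_def add_nonneg_pos add_pos_nonneg)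

lemma sq_eq_2sq: "(x::int)^2 = 2 * y^2 \<Longrightarrow> x = 0 \<and> y = 0"
proof (induction "nat \<bar>y\<bar>" arbitrary: x y rule: less_induct)
  case less
  have "even (x^2)" using less.prems by simp
  then obtain x' where x': "x = 2 * x'" by auto
  then have "y^2 = 2 * x'^2" using less.prems by (simp add: power2_eq_square)
  then have "even (y^2)" by simp
  then obtain y' where y': "y = 2 * y'" by auto
  have e: "x'^2 = 2 * y'^2" using \<open>y^2 = 2 * x'^2\<close> y' by (simp add: power2_eq_square)
  show ?case
  proof (cases "y = 0")
    case True then show ?thesis using less.prems by simp
  next
    case False
    then have "nat \<bar>y'\<bar> < nat \<bar>y\<bar>" using y' by auto
    from less.hyps[OF this e] show ?thesis using x' y' by simp
  qed
qed

lemma zN_0_iff: "zN u = 0 \<longleftrightarrow> u = (0,0)"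
  using sq_eq_2sq[of "fst u" "snd u"] by (cases u) (auto simp: zN_def)

lemma zs_mult_0_iff: "zs_mult u v = (0,0) \<longleftrightarrow> u = (0,0) \<or> v = (0,0)"
  by (metis zN_0_iff zN_mult mult_eq_0_iff zs_mult_0)

lemma near_mult: fixes s n :: int assumes "n \<noteq> 0" shows "\<exists>c. 2 * \<bar>s - c * n\<bar> \<le> \<bar>n\<bar>"
proof -
  define m where "m = \<bar>n\<bar>"
  have m: "m > 0" using assms by (simp add: m_def)
  have "\<exists>c. 2 * \<bar>s - c * m\<bar> \<le> m"
  proof (cases "2 * (s mod m) \<le> m")
    case True
    have "s - (s div m) * m = s mod m" by (simp add: minus_div_mult_eq_mod)
    then show ?thesis using True m by (intro exI[of _ "s div m"]) auto
  next
    case False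
    have eq: "s - (s div m + 1) * m = s mod m - m" by (simp add: algebra_simps minus_div_mult_eq_mod)
    moreover have "s mod m < m" using m by simp
    then have "\<bar>s mod m - m\<bar> = m - s mod m" by simp
    ultimately have "2 * \<bar>s - (s div m + 1) * m\<bar> \<le> m" using False unfolding eq by simp
    then show ?thesis by blast
  qed
  then obtain c where c: "2 * \<bar>s - c * m\<bar> \<le> m" by blast
  show ?thesis
  proof (cases "n > 0")
    case True then show ?thesis using c by (auto simp: m_def)
  next
    case False
    then have "m = - n" by (simp add: m_def)
    then show ?thesis using c by (intro exI[of _ "-c"]) (auto simp: m_def)
  qed
qed

lemma zs_euclid:
  assumes "d \<noteq> (0,0)"
  shows "\<exists>q. \<bar>zN (zs_add u (zs_mult q d))\<bar> < \<bar>zN d\<bar>"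
proof -
  define n where "n = zN d"
  have n0: "n \<noteq> 0" using assms zN_0_iff by (simp add: n_def)
  obtain s t where st: "zs_mult u (zconj d) = (s,t)" by force
  obtain c1 where c1: "2 * \<bar>s - c1 * n\<bar> \<le> \<bar>n\<bar>" using near_mult[OF n0] by blast
  obtain c2 where c2: "2 * \<bar>t - c2 * n\<bar> \<le> \<bar>n\<bar>" using near_mult[OF n0] by blast
  define r where "r = zs_add u (zs_mult (-c1, -c2) d)"
  have "zs_mult r (zconj d) = zs_add (zs_mult u (zconj d)) (zs_mult (-c1,-c2) (zs_mult d (zconj d)))"
    by (simp add: r_def zs_mult_def zs_add_def zconj_def algebra_simps)
  also have "\<dots> = zs_add (s,t) (zs_mult (-c1,-c2) (n,0))"
    by (simp only: st mult_conj n_def)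
  also have "\<dots> = (s - c1 * n, t - c2 * n)"
    by (simp add: zs_add_def zs_mult_def)
  finally have e: "zs_mult r (zconj d) = (s - c1 * n, t - c2 * n)" .
  define e1 where "e1 = s - c1 * n"
  define e2 where "e2 = t - c2 * n"
  have "zN r * n = zN (zs_mult r (zconj d))" by (simp add: zN_mult n_def)
  also have "\<dots> = e1^2 - 2 * e2^2" by (simp only: e) (simp add: zN_def e1_def e2_def)
  finally have "zN r * n = e1^2 - 2 * e2^2" .
  moreover have "4 * e1^2 \<le> n^2"
  proof -
    have "(2 * \<bar>e1\<bar>)^2 \<le> \<bar>n\<bar>^2" using c1 by (intro power_mono) (auto simp: e1_def)
    then show ?thesis by (simp add: power_mult_distrib)
  qed
  moreover have "4 * e2^2 \<le> n^2"
  proof -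
    have "(2 * \<bar>e2\<bar>)^2 \<le> \<bar>n\<bar>^2" using c2 by (intro power_mono) (auto simp: e2_def)
    then show ?thesis by (simp add: power_mult_distrib)
  qed
  moreover have "n^2 > 0" using n0 by simp
  ultimately have "\<bar>4 * (zN r * n)\<bar> < 4 * n^2" using zero_le_power2[of e1] zero_le_power2[of e2] by (simp only: abs_less_iff right_diff_distrib minus_diff_eq) (intro conjI; linarith)
  then have "\<bar>zN r\<bar> * \<bar>n\<bar> < \<bar>n\<bar> * \<bar>n\<bar>" by (simp add: abs_mult power2_eq_square)
  then have "\<bar>zN r\<bar> < \<bar>n\<bar>" using n0 by (meson abs_ge_zero mult_less_cancel_right_pos zero_less_abs_iff)
  then show ?thesis unfolding r_def n_def by blast
qed

lemma two_qr_nat: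
  fixes p :: nat
  assumes pr: "prime p" and p8: "p mod 8 = 1 \<or> p mod 8 = 7"
  shows "\<exists>y::int. [y^2 = 2] (mod int p)"
proof -
  have "p \<noteq> 2" using p8 by auto
  then have p2: "2 < p" using prime_gt_1_nat[OF pr] by linarith
  have nc: "[2 \<noteq> 0] (mod int p)"
  proof
    assume "[2 = 0] (mod int p)"
    then have "int p dvd 2" by (simp add: cong_0_iff)
    then have "int p dvd int 2" by simp
    then have "p dvd 2" by (simp only: int_dvd_int_iff)
    then show False using p2 by (simp add: nat_dvd_not_less)
  qed
  interpret G: GAUSS p 2 using pr p2 nc by unfold_locales auto
  define h where "h = (int p - 1) div 2"
  have A: "G.A = {0<..h}" by (simp add: G.A_def h_def)
  have C: "G.C = (\<lambda>x. 2 * x) ` G.A"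
  proof -
    have "x * 2 mod int p = 2 * x" if "x \<in> G.A" for x
      using that by (auto simp: A h_def)
    then show ?thesis unfolding G.C_def G.B_def image_image
      by (intro image_cong) (auto simp: mult.commute)
  qed
  have E: "G.E = (\<lambda>x. 2 * x) ` {h div 2 + 1 .. h}"
    unfolding G.E_def C A h_def by auto
  have "card G.E = card {h div 2 + 1 .. h}"
    unfolding E by (rule card_image) (auto simp: inj_on_def)
  also have "\<dots> = nat (h - h div 2)" by simp
  finally have cE: "card G.E = nat (h - h div 2)" .
  have "even (h - h div 2)"
  proof -
    obtain m where "p = 8 * m + 1 \<or> p = 8 * m + 7" using p8 by (metis div_mod_decomp mult.commute)
    then show ?thesis
    proof
      assume "p = 8 * m + 1"
      then have "h = 4 * int m" by (simp add: h_def)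
      then show ?thesis by simp
    next
      assume "p = 8 * m + 7"
      then have "h = 4 * int m + 3" by (simp add: h_def)
      then have "h - h div 2 = 2 * int m + 2" by simp
      then show ?thesis by simp
    qed
  qed
  moreover have "0 \<le> h - h div 2" using p2 by (simp add: h_def)
  ultimately have "even (card G.E)" unfolding cE by (simp add: even_nat_iff)
  then have "Legendre 2 (int p) = 1" using G.gauss_lemma by simp
  then have "QuadRes (int p) 2" by (simp add: Legendre_def split: if_splits)
  then show ?thesis by (simp add: QuadRes_def)
qed

lemma ideal_mult: "zs_ideal P \<Longrightarrow> u \<in> P \<Longrightarrow> zs_mult r u \<in> P"
  unfolding zs_ideal_def by blast
lemma ideal_mult': "zs_ideal P \<Longrightarrow> u \<in> P \<Longrightarrow> zs_mult u r \<in> P"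
  by (subst zs_mult_comm) (rule ideal_mult)
lemma ideal_add: "zs_ideal P \<Longrightarrow> u \<in> P \<Longrightarrow> v \<in> P \<Longrightarrow> zs_add u v \<in> P"
  by (simp add: zs_ideal_def)

lemma principal:
  assumes I: "zs_ideal P" and x: "x \<in> P" "x \<noteq> (0,0)"
  shows "\<exists>d. d \<in> P \<and> d \<noteq> (0,0) \<and> (\<forall>u\<in>P. \<exists>w. u = zs_mult d w)"
proof -
  define Pr where "Pr = (\<lambda>n. \<exists>d. d \<in> P \<and> d \<noteq> (0,0) \<and> nat \<bar>zN d\<bar> = n)"
  have ex: "Pr (nat \<bar>zN x\<bar>)" unfolding Pr_def using x by blast
  define n0 where "n0 = (LEAST n. Pr n)"
  have "Pr n0" unfolding n0_def by (rule LeastI[of Pr, OF ex])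
  then obtain d where d: "d \<in> P" "d \<noteq> (0,0)" "nat \<bar>zN d\<bar> = n0" by (auto simp: Pr_def)
  have "\<exists>w. u = zs_mult d w" if u: "u \<in> P" for u
  proof -
    obtain q where q: "\<bar>zN (zs_add u (zs_mult q d))\<bar> < \<bar>zN d\<bar>" using zs_euclid[OF d(2)] by blast
    have inP: "zs_add u (zs_mult q d) \<in> P" using I u d(1) by (simp add: ideal_add ideal_mult)
    have "zs_add u (zs_mult q d) = (0,0)"
    proof (rule ccontr)
      assume ne: "zs_add u (zs_mult q d) \<noteq> (0,0)"
      then have "Pr (nat \<bar>zN (zs_add u (zs_mult q d))\<bar>)" unfolding Pr_def using inP by blast
      then have "n0 \<le> nat \<bar>zN (zs_add u (zs_mult q d))\<bar>" unfolding n0_def by (rule Least_le)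
      then show False using q d(3) by linarith
    qed
    then have "u = zs_mult d (- fst q, - snd q)"
      by (cases u, cases q, cases d) (auto simp: zs_add_def zs_mult_def algebra_simps)
    then show ?thesis by blast
  qed
  then show ?thesis using d by blast
qed

lemma ideal_UNIV: assumes I: "zs_ideal P" and "(1,0) \<in> P" shows "P = UNIV"
proof -
  have "zs_mult u (1,0) \<in> P" for u using ideal_mult[OF I assms(2)] .
  then show ?thesis by auto
qed

lemma unit_inverse: assumes "zN w = 1 \<or> zN w = -1" shows "zs_mult w (zs_mult (zN w, 0) (zconj w)) = (1,0)"
proof -
  have "zs_mult w (zs_mult (zN w, 0) (zconj w)) = zs_mult (zs_mult w (zN w, 0)) (zconj w)"
    by (rule zs_mult_assoc[symmetric])
  also have "\<dots> = zs_mult (zs_mult (zN w, 0) w) (zconj w)" by (simp only: zs_mult_comm[of w])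
  also have "\<dots> = zs_mult (zN w, 0) (zs_mult w (zconj w))" by (rule zs_mult_assoc)
  also have "\<dots> = (zN w * zN w, 0)" by (simp only: mult_conj) (simp add: zs_mult_def)
  finally show ?thesis using assms by auto
qed

lemma gen_norm_p:
  fixes p :: int
  assumes pr: "prime p" and p8: "p mod 8 = 1 \<or> p mod 8 = 7"
    and I: "zs_prime_ideal P" and lo: "lies_over P p"
  shows "\<exists>s. s \<in> P \<and> zN s = p \<and> (\<forall>u\<in>P. \<exists>w. u = zs_mult s w)"
proof -
  have Id: "zs_ideal P" and NU: "P \<noteq> UNIV"
    and pri: "\<And>u v. zs_mult u v \<in> P \<Longrightarrow> u \<in> P \<or> v \<in> P"
    using I by (auto simp: zs_prime_ideal_def)
  have inP: "(n,0) \<in> P \<longleftrightarrow> p dvd n" for n using lo by (auto simp: lies_over_def)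
  have p1: "p > 1" using pr prime_gt_1_int by blast
  have pP: "(p,0) \<in> P" using inP by simp
  obtain d where d: "d \<in> P" "d \<noteq> (0,0)" "\<forall>u\<in>P. \<exists>w. u = zs_mult d w"
    using principal[OF Id pP] p1 by auto
  obtain w where w: "(p,0) = zs_mult d w" using d(3) pP by blast
  have "zN d * zN w = zN (zs_mult d w)" by (simp add: zN_mult)
  also have "\<dots> = zN (p,0)" by (simp add: w)
  also have "\<dots> = p^2" by (simp add: zN_def)
  finally have "zN d * zN w = p^2" .
  then have "zN d dvd p^2" using dvd_triv_left[of "zN d" "zN w"] by simp
  then obtain m where m0: "m \<le> 2" "normalize (zN d) = p ^ m" using divides_primepow[OF pr] by blast
  then have m: "m \<le> 2" "\<bar>zN d\<bar> = p ^ m" by simp_all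
  have "m = 0 \<or> m = 1 \<or> m = 2" using m(1) by auto
  moreover
  { assume "m = 0"
    then have "\<bar>zN d\<bar> = 1" using m by simp
    then have "zN d = 1 \<or> zN d = -1" by linarith
    have "zs_mult d (zs_mult (zN d, 0) (zconj d)) \<in> P" using Id d(1) by (simp add: ideal_mult')
    then have "(1,0) \<in> P" using unit_inverse[OF \<open>zN d = 1 \<or> zN d = -1\<close>] by simp
    then have False using ideal_UNIV[OF Id] NU by blast }
  moreover
  { assume "m = 2"
    then have "\<bar>zN d\<bar> = p^2" using m by simp
    moreover have "\<bar>zN d\<bar> * \<bar>zN w\<bar> = p^2"
    proof -
      have "\<bar>zN d\<bar> * \<bar>zN w\<bar> = \<bar>zN d * zN w\<bar>" by (rule abs_mult[symmetric])
      also have "\<dots> = p^2" using \<open>zN d * zN w = p^2\<close> by simp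
      finally show ?thesis .
    qed
    moreover have "p^2 \<noteq> 0" using p1 by simp
    ultimately have "\<bar>zN w\<bar> = 1" by simp
    then have wu: "zN w = 1 \<or> zN w = -1" by linarith
    define wi where "wi = zs_mult (zN w, 0) (zconj w)"
    have "zs_mult (p,0) wi = zs_mult (zs_mult d w) wi" by (simp only: w)
    also have "\<dots> = zs_mult d (zs_mult w wi)" by (rule zs_mult_assoc)
    also have "\<dots> = d" unfolding wi_def unit_inverse[OF wu] by simp
    finally have dpw: "d = zs_mult (p,0) wi" by (rule sym)
    have allp: "p dvd fst u \<and> p dvd snd u" if "u \<in> P" for u
    proof -
      have "\<exists>v. u = zs_mult d v" using d(3) that by (rule bspec)
      then obtain v where "u = zs_mult d v" by (elim exE)
      then have "u = zs_mult (zs_mult (p,0) wi) v" unfolding dpw[symmetric] .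
      then have "u = zs_mult (p,0) (zs_mult wi v)" by (simp only: zs_mult_assoc)
      then show ?thesis by (simp add: zs_mult_def)
    qed
    have pn: "int (nat p) = p" using p1 by simp
    have prn: "prime (nat p)" using pr by simp
    have "nat p mod 8 = nat (p mod 8)" using p1 by (simp add: nat_mod_distrib)
    then have p8n: "nat p mod 8 = 1 \<or> nat p mod 8 = 7" using p8 by auto
    obtain y where y: "[y^2 = 2] (mod int (nat p))"
      using two_qr_nat[OF prn p8n] by blast
    then have "p dvd y^2 - 2" using pn by (simp add: cong_iff_dvd_diff)
    then have "(y^2 - 2, 0) \<in> P" using inP by simp
    moreover have "(y^2 - 2, 0) = zs_mult (y,1) (y,-1)" by (simp add: zs_mult_def power2_eq_square)
    ultimately have "zs_mult (y,1) (y,-1) \<in> P" by simp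
    then have "(y,1) \<in> P \<or> (y,-1) \<in> P" by (rule pri)
    then have "p dvd 1"
    proof
      assume "(y,1) \<in> P" from allp[OF this] show ?thesis by simp
    next
      assume "(y,-1) \<in> P" from allp[OF this] show ?thesis by simp
    qed
    then have False using p1 by simp }
  moreover
  { assume "m = 1"
    then have "\<bar>zN d\<bar> = p" using m by simp
    then have "zN d = p \<or> zN d = -p" by linarith
    then have ?thesis
    proof
      assume "zN d = p" then show ?thesis using d by blast
    next
      assume nd: "zN d = -p"
      define s where "s = zs_mult d (1,1)"
      have "s \<in> P" using Id d(1) by (simp add: s_def ideal_mult')
      moreover have "zN s = p"
      proof -
        have "zN s = zN d * zN (1,1)" unfolding s_def by (rule zN_mult)
        moreover have "zN (1,1) = -1" by (simp add: zN_def)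
        ultimately show ?thesis using nd by simp
      qed
      moreover have "\<forall>u\<in>P. \<exists>w. u = zs_mult s w"
      proof
        fix u assume "u \<in> P"
        then obtain v where v: "u = zs_mult d v" using d(3) by blast
        have "zs_mult (1,1) (zs_mult (-1,1) v) = v" by (simp add: zs_mult_def)
        then have "u = zs_mult d (zs_mult (1,1) (zs_mult (-1,1) v))" using v by simp
        then have "u = zs_mult s (zs_mult (-1,1) v)" unfolding s_def by (simp only: zs_mult_assoc)
        then show "\<exists>w. u = zs_mult s w" by blast
      qed
      ultimately show ?thesis by blast
    qed }
  ultimately show ?thesis by blast
qed

lemma prime_not_sq: fixes p k :: int assumes "prime p" shows "p \<noteq> k^2"
proof
  assume h: "p = k^2"
  then have "p dvd k * k" by (simp add: power2_eq_square)
  then have "p dvd k" using assms prime_dvd_mult_iff by blast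
  then obtain m where km: "k = p * m" by blast
  have "p = (p*m)^2" using h unfolding km .
  also have "\<dots> = p * (p * m^2)" by (simp add: power2_eq_square algebra_simps)
  finally have "p = p * (p * m^2)" .
  moreover have "p \<noteq> 0" using assms by auto
  ultimately have "p * m^2 = 1" using mult_cancel_left1[of p "p*m^2"] by blast
  then have "p dvd 1" by (subst \<open>p * m^2 = 1\<close>[symmetric]) (rule dvd_triv_left)
  then show False using assms by (simp add: prime_int_iff)
qed

lemma pos_sol_from_norm:
  fixes p :: int assumes pr: "prime p" and n: "zN (x,y) = p"
  shows "\<bar>x\<bar> > 0 \<and> \<bar>y\<bar> > 0 \<and> \<bar>x\<bar>^2 - 2 * \<bar>y\<bar>^2 = p"
proof -
  have p1: "p > 1" using pr prime_gt_1_int by blast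
  have e: "x^2 - 2*y^2 = p" using n by (simp add: zN_def)
  have "x \<noteq> 0"
  proof
    assume "x = 0"
    then have "p = -2*y^2" using e by simp
    moreover have "0 \<le> y^2" by simp
    ultimately show False using p1 by linarith
  qed
  moreover have "y \<noteq> 0" using e prime_not_sq[OF pr, of x] by auto
  ultimately show ?thesis using e by simp
qed

lemma a_min_props:
  fixes p :: int
  assumes ex: "a1 > 0" "b1 > 0" "a1^2 - 2*b1^2 = p"
  shows "a_min p > 0 \<and> (\<exists>b>0. (a_min p)^2 - 2*b^2 = p)
     \<and> (\<forall>a b. a > 0 \<longrightarrow> b > 0 \<longrightarrow> a^2 - 2*b^2 = p \<longrightarrow> a_min p \<le> a)"
proof -
  define S where "S = (\<lambda>n::nat. n > 0 \<and> (\<exists>b::int. b > 0 \<and> (int n)^2 - 2*b^2 = p))"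
  have "S (nat a1)" using ex by (auto simp: S_def)
  then have S0: "S (LEAST n. S n)" by (rule LeastI[of S])
  define n0 where "n0 = (LEAST n. S n)"
  have R: "int n0 > 0 \<and> (\<exists>b::int. b > 0 \<and> (int n0)^2 - 2*b^2 = p)" using S0 by (simp add: S_def n0_def)
  have lw: "int n0 \<le> a" if "a > 0" "\<exists>b::int. b > 0 \<and> a^2 - 2*b^2 = p" for a
  proof -
    have "S (nat a)" using that by (simp add: S_def)
    then have "n0 \<le> nat a" unfolding n0_def by (rule Least_le)
    then show ?thesis using that by linarith
  qed
  have "a_min p = int n0"
    unfolding a_min_def by (rule Least_equality) (use R lw in auto)
  then show ?thesis using R lw by auto
qed

lemma min_ge_2b:
  fixes p a b :: int
  assumes pr: "prime p" and ab: "a > 0" "b > 0" "a^2 - 2*b^2 = p"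
    and mn: "\<forall>a' b'. a' > 0 \<longrightarrow> b' > 0 \<longrightarrow> a'^2 - 2*b'^2 = p \<longrightarrow> a \<le> a'"
  shows "a \<ge> 2 * b"
proof -
  have "zN (3*a - 4*b, 3*b - 2*a) = a^2 - 2*b^2" by (simp add: zN_def power2_eq_square algebra_simps)
  then have "zN (3*a - 4*b, 3*b - 2*a) = p" using ab(3) by (rule trans)
  from pos_sol_from_norm[OF pr this] have
    ps: "\<bar>3*a - 4*b\<bar> > 0" "\<bar>3*b - 2*a\<bar> > 0" "\<bar>3*a - 4*b\<bar>^2 - 2*\<bar>3*b - 2*a\<bar>^2 = p" by auto
  have le: "a \<le> \<bar>3*a - 4*b\<bar>" using mn ps by blast
  have p1: "p > 1" using pr prime_gt_1_int by blast
  have "b < a"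
  proof (rule ccontr)
    assume "\<not> b < a"
    then have "a*a \<le> b*b" using ab by (simp add: mult_mono)
    moreover have "b*b > 0" using ab by simp
    moreover have "p = a*a - 2*(b*b)" using ab(3) by (simp add: power2_eq_square)
    ultimately show False using p1 by linarith
  qed
  then show ?thesis using le by linarith
qed

lemma norm_not_3: "zN w \<noteq> 3 \<and> zN w \<noteq> -3"
proof -
  obtain x y where w: "w = (x,y)" by force
  have "x^2 - 2*y^2 \<noteq> 3 \<and> x^2 - 2*y^2 \<noteq> -3"
  proof (rule ccontr)
    assume "\<not> ?thesis"
    then have h: "x^2 - 2*y^2 = 3 \<or> x^2 - 2*y^2 = -3" by blast
    then have "odd (x^2)"
    proof
      assume "x^2 - 2*y^2 = 3" then have "x^2 = 2*(y^2+1) + 1" by simp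
      then show ?thesis by simp
    next
      assume "x^2 - 2*y^2 = -3" then have "x^2 = 2*(y^2-2) + 1" by simp
      then show ?thesis by simp
    qed
    then have "odd x" by simp
    then obtain k where k: "x = 2*k+1" by (rule oddE)
    have "even (k*(k+1))" by simp
    then obtain j where j: "k*(k+1) = 2*j" by blast
    have x2: "x^2 = 8*j + 1" using k j by (simp add: power2_eq_square algebra_simps)
    have "y^2 mod 4 = 0 \<or> y^2 mod 4 = 1"
    proof (cases "even y")
      case True then obtain t where "y = 2*t" by blast
      then show ?thesis by (simp add: power2_eq_square)
    next
      case False then obtain t where "y = 2*t+1" by (rule oddE)
      then have e: "y^2 = 4*(t*t+t) + 1" by (simp add: power2_eq_square algebra_simps)
      have "\<And>m::int. (4*m+1) mod 4 = 1" by presburger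
      then show ?thesis unfolding e by blast
    qed
    moreover have "y^2 = 4*j - 1 \<or> y^2 = 4*j + 2"
    proof (cases "x^2 - 2*y^2 = 3")
      case True then show ?thesis using x2 by linarith
    next
      case False then have "x^2 - 2*y^2 = -3" using h by blast
      then show ?thesis using x2 by linarith
    qed
    ultimately show False
    proof -
      fix Y :: int
      have "\<And>Y::int. (Y mod 4 = 0 \<or> Y mod 4 = 1) \<Longrightarrow> (Y = 4*j - 1 \<or> Y = 4*j + 2) \<Longrightarrow> False"
        by presburger
      then show "(y^2 mod 4 = 0 \<or> y^2 mod 4 = 1) \<Longrightarrow> (y^2 = 4*j - 1 \<or> y^2 = 4*j + 2) \<Longrightarrow> False" .
    qed
  qed
  then show ?thesis by (simp add: w zN_def)
qed

fun zpow :: "zsqrt2 \<Rightarrow> nat \<Rightarrow> zsqrt2" where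
  "zpow u 0 = (1,0)"
| "zpow u (Suc n) = zs_mult u (zpow u n)"

definition zneg :: "zsqrt2 \<Rightarrow> zsqrt2" where "zneg u = (- fst u, - snd u)"

lemma zneg_mult: "zs_mult (zneg a) b = zneg (zs_mult a b)"
  by (simp add: zneg_def zs_mult_def)
lemma zmult_neg: "zs_mult b (zneg a) = zneg (zs_mult b a)"
  by (simp add: zneg_def zs_mult_def)
lemma zQ_neg[simp]: "zQ (zneg a) = zQ a" by (simp add: zneg_def zQ_def)

lemma zpow_Suc': "zpow u (Suc n) = zs_mult (zpow u n) u"
  by (simp add: zs_mult_comm)

lemma rec6: "zQ (zs_mult z (1,1)) + zQ (zs_mult z (-1,1)) = 6 * zQ z"
  by (simp add: zQ_def zs_mult_def power2_eq_square algebra_simps)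
lemma rec6': "zQ (zs_mult z (-1,1)) + zQ (zs_mult z (1,1)) = 6 * zQ z"
  using rec6[of z] by linarith

lemma seq_step:
  assumes c1: "\<And>z w. zs_mult (zs_mult z (zs_mult u w)) v = zs_mult z w"
    and c2: "\<And>z w. zs_mult (zs_mult z w) u = zs_mult z (zs_mult u w)"
    and rec: "\<And>z. zQ (zs_mult z u) + zQ (zs_mult z v) = 6 * zQ z"
    and base: "zQ z \<le> zQ (zs_mult z u)"
  shows "zQ (zs_mult z (zpow u n)) \<le> zQ (zs_mult z (zpow u (Suc n)))"
proof (induction n)
  case 0 then show ?case using base by simp
next
  case (Suc n)
  define y where "y = zs_mult z (zpow u (Suc n))"
  have "zs_mult y u = zs_mult z (zpow u (Suc (Suc n)))" unfolding y_def by (simp only: c2 zpow.simps(2))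
  moreover have "zs_mult y v = zs_mult z (zpow u n)" unfolding y_def zpow.simps(2) by (rule c1)
  ultimately have "zQ (zs_mult z (zpow u (Suc (Suc n)))) + zQ (zs_mult z (zpow u n)) = 6 * zQ y"
    using rec[of y] by simp
  moreover have "0 \<le> zQ y" by (rule zQ_nonneg)
  ultimately show ?case using Suc.IH unfolding y_def by linarith
qed

lemma seq_ge:
  assumes c1: "\<And>z w. zs_mult (zs_mult z (zs_mult u w)) v = zs_mult z w"
    and c2: "\<And>z w. zs_mult (zs_mult z w) u = zs_mult z (zs_mult u w)"
    and rec: "\<And>z. zQ (zs_mult z u) + zQ (zs_mult z v) = 6 * zQ z"
    and base: "zQ z \<le> zQ (zs_mult z u)"
  shows "zQ z \<le> zQ (zs_mult z (zpow u n))"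
proof (induction n)
  case 0 then show ?case by simp
next
  case (Suc n)
  then show ?case using seq_step[OF c1 c2 rec base, of n] by linarith
qed

lemma eps_c1: "zs_mult (zs_mult z (zs_mult (1,1) w)) (-1,1) = zs_mult z w"
  by (simp add: zs_mult_def algebra_simps)
lemma eta_c1: "zs_mult (zs_mult z (zs_mult (-1,1) w)) (1,1) = zs_mult z w"
  by (simp add: zs_mult_def algebra_simps)
lemma gen_c2: "zs_mult (zs_mult z w) u = zs_mult z (zs_mult u w)"
  by (simp add: zs_mult_def algebra_simps)

lemma seq_eps: "zQ z \<le> zQ (zs_mult z (1,1)) \<Longrightarrow> zQ z \<le> zQ (zs_mult z (zpow (1,1) n))"
  by (rule seq_ge[OF eps_c1 gen_c2 rec6])
lemma seq_eta: "zQ z \<le> zQ (zs_mult z (-1,1)) \<Longrightarrow> zQ z \<le> zQ (zs_mult z (zpow (-1,1) n))"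
  by (rule seq_ge[OF eta_c1 gen_c2 rec6'])

definition Uset :: "zsqrt2 set" where
  "Uset = {w. \<exists>n. w = zpow (1,1) n \<or> w = zneg (zpow (1,1) n) \<or> w = zpow (-1,1) n \<or> w = zneg (zpow (-1,1) n)}"

lemma zneg_neg[simp]: "zneg (zneg a) = a" by (simp add: zneg_def)

lemma eta_eps_pow: "zs_mult (zpow (-1,1) (Suc m)) (1,1) = zpow (-1,1) m"
  using eta_c1[of "(1,0)" "zpow (-1,1) m"] by simp
lemma eps_eta_pow: "zs_mult (zpow (1,1) (Suc m)) (-1,1) = zpow (1,1) m"
  using eps_c1[of "(1,0)" "zpow (1,1) m"] by simp

lemma U1: "zpow (1,1) n \<in> Uset" unfolding Uset_def by blast
lemma U2: "zneg (zpow (1,1) n) \<in> Uset" unfolding Uset_def by blast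
lemma U3: "zpow (-1,1) n \<in> Uset" unfolding Uset_def by blast
lemma U4: "zneg (zpow (-1,1) n) \<in> Uset" unfolding Uset_def by blast

lemma Uset_cases:
  assumes "v \<in> Uset"
  obtains n where "v = zpow (1,1) n" | n where "v = zneg (zpow (1,1) n)"
    | n where "v = zpow (-1,1) n" | n where "v = zneg (zpow (-1,1) n)"
  using assms unfolding Uset_def by blast

lemma Uset_eps: assumes "v \<in> Uset" shows "zs_mult v (1,1) \<in> Uset"
  using assms
proof (cases rule: Uset_cases)
  case (1 n) then show ?thesis using U1[of "Suc n"] by (simp only: zpow_Suc')
next
  case (2 n) then show ?thesis using U2[of "Suc n"] by (simp only: zpow_Suc' zneg_mult)
next
  case (3 n) then show ?thesis
  proof (cases n)
    case 0 then show ?thesis using 3 U1[of 1] by simp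
  next
    case (Suc m) then show ?thesis using 3 U3[of m] eta_eps_pow[of m] by simp
  qed
next
  case (4 n) then show ?thesis
  proof (cases n)
    case 0 then show ?thesis using 4 U2[of 1] by (simp add: zneg_mult)
  next
    case (Suc m) then show ?thesis using 4 U4[of m] eta_eps_pow[of m] by (simp add: zneg_mult)
  qed
qed

lemma Uset_eta: assumes "v \<in> Uset" shows "zs_mult v (-1,1) \<in> Uset"
  using assms
proof (cases rule: Uset_cases)
  case (3 n) then show ?thesis using U3[of "Suc n"] by (simp only: zpow_Suc')
next
  case (4 n) then show ?thesis using U4[of "Suc n"] by (simp only: zpow_Suc' zneg_mult)
next
  case (1 n) then show ?thesis
  proof (cases n)
    case 0 then show ?thesis using 1 U3[of 1] by simp
  next
    case (Suc m) then show ?thesis using 1 U1[of m] eps_eta_pow[of m] by simp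
  qed
next
  case (2 n) then show ?thesis
  proof (cases n)
    case 0 then show ?thesis using 2 U4[of 1] by (simp add: zneg_mult)
  next
    case (Suc m) then show ?thesis using 2 U2[of m] eps_eta_pow[of m] by (simp add: zneg_mult)
  qed
qed

lemma unit_class: "zN w = 1 \<or> zN w = -1 \<Longrightarrow> w \<in> Uset"
proof (induction "nat (\<bar>fst w\<bar> + \<bar>snd w\<bar>)" arbitrary: w rule: less_induct)
  case less
  obtain x y where w: "w = (x,y)" by force
  have N: "x^2 - 2*y^2 = 1 \<or> x^2 - 2*y^2 = -1" using less.prems by (simp add: w zN_def)
  show ?case
  proof (cases "y = 0")
    case True
    moreover have "x^2 \<noteq> -1" using zero_le_power2[of x] by linarith
    ultimately have "x^2 = 1" using N by auto
    then have "x = 1 \<or> x = -1" by (simp add: power2_eq_1_iff)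
    then show ?thesis unfolding Uset_def w using True
      by (elim disjE) (rule CollectI, rule exI[of _ 0], simp add: zneg_def)+
  next
    case y0: False
    have ay: "1 \<le> \<bar>y\<bar>" using y0 by arith
    then have y2: "1 \<le> y^2" using abs_le_square_iff[of 1 y] by simp
    have x0: "x \<noteq> 0"
    proof
      assume "x = 0"
      then have "2 * y^2 = -1 \<or> 2 * y^2 = 1" using N by auto
      moreover have "\<And>k::int. 2 * k \<noteq> -1 \<and> 2 * k \<noteq> 1" by presburger
      ultimately show False by blast
    qed
    have "y^2 \<le> x^2" using N y2 by linarith
    then have b1: "\<bar>y\<bar> \<le> \<bar>x\<bar>" using abs_le_square_iff by blast
    have "x^2 < (2*y)^2" using N y2 by (simp add: power_mult_distrib) linarith
    then have b2: "\<bar>x\<bar> < 2 * \<bar>y\<bar>" using abs_le_square_iff[of "2*y" x] by (simp add: abs_mult)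
    show ?thesis
    proof (cases "(x > 0 \<and> y > 0) \<or> (x < 0 \<and> y < 0)")
      case True
      define w' where "w' = zs_mult w (-1,1)"
      have w'e: "w' = (2*y - x, x - y)" by (simp add: w'_def w zs_mult_def)
      have "zN w' = zN w * zN (-1,1)" unfolding w'_def by (rule zN_mult)
      then have "zN w' = 1 \<or> zN w' = -1" using less.prems by (auto simp: zN_def)
      moreover have "\<bar>2*y - x\<bar> + \<bar>x - y\<bar> < \<bar>x\<bar> + \<bar>y\<bar>" using True b1 b2 by arith
      then have "nat (\<bar>fst w'\<bar> + \<bar>snd w'\<bar>) < nat (\<bar>fst w\<bar> + \<bar>snd w\<bar>)" by (simp add: w'e w)
      ultimately have "w' \<in> Uset" using less.hyps by blast
      then have "zs_mult w' (1,1) \<in> Uset" by (rule Uset_eps)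
      moreover have "zs_mult w' (1,1) = w" by (simp add: w'_def zs_mult_def w)
      ultimately show ?thesis by simp
    next
      case False
      then have F: "(x > 0 \<and> y < 0) \<or> (x < 0 \<and> y > 0)" using x0 y0 by auto
      define w' where "w' = zs_mult w (1,1)"
      have w'e: "w' = (x + 2*y, x + y)" by (simp add: w'_def w zs_mult_def)
      have "zN w' = zN w * zN (1,1)" unfolding w'_def by (rule zN_mult)
      then have "zN w' = 1 \<or> zN w' = -1" using less.prems by (auto simp: zN_def)
      moreover have "\<bar>x + 2*y\<bar> + \<bar>x + y\<bar> < \<bar>x\<bar> + \<bar>y\<bar>" using F b1 b2 by arith
      then have "nat (\<bar>fst w'\<bar> + \<bar>snd w'\<bar>) < nat (\<bar>fst w\<bar> + \<bar>snd w\<bar>)" by (simp add: w'e w)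
      ultimately have "w' \<in> Uset" using less.hyps by blast
      then have "zs_mult w' (-1,1) \<in> Uset" by (rule Uset_eta)
      moreover have "zs_mult w' (-1,1) = w" by (simp add: w'_def zs_mult_def w)
      ultimately show ?thesis by simp
    qed
  qed
qed

lemma zQ_sqrt2: "zQ (zs_mult (0,1) z) = 2 * zQ z"
  by (simp add: zQ_def zs_mult_def power2_eq_square algebra_simps)

lemma core:
  fixes p a b :: int
  assumes pr: "prime p" and ab: "a > 0" "b > 0" "a^2 - 2*b^2 = p"
    and mn: "\<forall>a' b'. a' > 0 \<longrightarrow> b' > 0 \<longrightarrow> a'^2 - 2*b'^2 = p \<longrightarrow> a \<le> a'"
    and w0: "w \<noteq> (0,0)"
  shows "min (zQ (a,b)) (zQ (zs_mult (a,b) (-1,1))) \<le> zQ (zs_mult (a,b) w)"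
proof -
  define s where "s = (a,b)"
  define m where "m = min (zQ s) (zQ (zs_mult s (-1,1)))"
  have a2b: "a \<ge> 2*b" using min_ge_2b[OF pr ab mn] .
  have p1: "p > 1" using pr prime_gt_1_int by blast
  have base_eps: "zQ s \<le> zQ (zs_mult s (1,1))"
  proof -
    have "zQ (zs_mult s (1,1)) = zQ s + (2*a*a + 8*a*b + 4*b*b)"
      by (simp add: s_def zQ_def zs_mult_def power2_eq_square algebra_simps)
    moreover have "0 \<le> 2*a*a + 8*a*b + 4*b*b" using ab by simp
    ultimately show ?thesis by linarith
  qed
  have base_eta: "zQ (zs_mult s (-1,1)) \<le> zQ (zs_mult (zs_mult s (-1,1)) (-1,1))"
  proof -
    define K where "K = (a - 2*b)*(7*a - 6*b) + 2*(b*b)"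
    have "zQ (zs_mult (zs_mult s (-1,1)) (-1,1)) = zQ (zs_mult s (-1,1)) + 2 * K"
      by (simp add: K_def s_def zQ_def zs_mult_def power2_eq_square algebra_simps)
    moreover have "0 \<le> (a - 2*b)*(7*a - 6*b)" using a2b ab by simp
    then have "0 \<le> K" unfolding K_def by simp
    ultimately show ?thesis by linarith
  qed
  have unitc: "m \<le> zQ (zs_mult s v)" if "v \<in> Uset" for v
  proof -
    have eps: "m \<le> zQ (zs_mult s (zpow (1,1) n))" for n
      using seq_eps[OF base_eps, of n] unfolding m_def by linarith
    have eta: "m \<le> zQ (zs_mult s (zpow (-1,1) n))" for n
    proof (cases n)
      case 0 then show ?thesis unfolding m_def by simp
    next
      case (Suc k)
      have e: "zs_mult s (zpow (-1,1) n) = zs_mult (zs_mult s (-1,1)) (zpow (-1,1) k)"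
        using Suc by (simp add: zs_mult_assoc)
      show ?thesis using seq_eta[OF base_eta, of k] unfolding m_def e by linarith
    qed
    from that show ?thesis
    proof (cases rule: Uset_cases)
      case (1 n) then show ?thesis using eps by simp
    next
      case (2 n) then show ?thesis using eps by (simp add: zmult_neg)
    next
      case (3 n) then show ?thesis using eta by simp
    next
      case (4 n) then show ?thesis using eta by (simp add: zmult_neg)
    qed
  qed
  have mQ: "m \<le> a^2 + 2*b^2" unfolding m_def s_def by (simp add: zQ_def)
  have "4*b^2 \<le> a^2" using a2b ab power_mono[of "2*b" a 2] by (simp add: power_mult_distrib)
  then have m3p: "m \<le> 3 * p" using mQ ab(3) by linarith
  obtain x y where w: "w = (x,y)" by force
  have Nne0: "zN w \<noteq> 0" using w0 zN_0_iff by blast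
  consider "zN w = 1 \<or> zN w = -1" | "zN w = 2 \<or> zN w = -2" | "\<bar>zN w\<bar> \<ge> 4"
    using Nne0 norm_not_3[of w] by linarith
  then show ?thesis
  proof cases
    case 1 show ?thesis using unitc[OF unit_class[OF 1]] unfolding m_def s_def .
  next
    case 2
    then have e: "x^2 - 2*y^2 = 2 \<or> x^2 - 2*y^2 = -2" by (simp add: w zN_def)
    then have "x^2 = 2*(y^2+1) \<or> x^2 = 2*(y^2 - 1)" by auto
    then have "even (x^2)"
    proof
      assume h: "x^2 = 2*(y^2+1)" show ?thesis unfolding h by simp
    next
      assume h: "x^2 = 2*(y^2-1)" show ?thesis unfolding h by simp
    qed
    then have "even x" by simp
    then obtain x' where x': "x = 2*x'" by (elim evenE)
    define v where "v = (y, x')"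
    have wv: "w = zs_mult (0,1) v" by (simp add: w v_def x' zs_mult_def)
    have zv: "zN v = y^2 - 2*x'^2" by (simp add: v_def zN_def)
    have "x^2 = 4 * x'^2" by (simp add: x' power_mult_distrib)
    then have "zN v = 1 \<or> zN v = -1" using e unfolding zv by (elim disjE; linarith)
    then have "m \<le> zQ (zs_mult s v)" by (intro unitc unit_class)
    moreover have "zQ (zs_mult s w) = 2 * zQ (zs_mult s v)"
    proof -
      have "zs_mult s w = zs_mult (0,1) (zs_mult s v)" unfolding wv by (simp add: zs_mult_def algebra_simps)
      then show ?thesis by (simp add: zQ_sqrt2)
    qed
    moreover have "0 \<le> zQ (zs_mult s v)" by (rule zQ_nonneg)
    ultimately show ?thesis unfolding m_def s_def by linarith
  next
    case 3
    have "\<bar>zN (zs_mult s w)\<bar> \<le> zQ (zs_mult s w)" by (rule zQ_ge_zN)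
    moreover have "zN (zs_mult s w) = p * zN w"
    proof -
      have "zN s = p" using ab(3) by (simp add: s_def zN_def)
      then show ?thesis by (simp only: zN_mult)
    qed
    moreover have "\<bar>p * zN w\<bar> \<ge> p * 4" using 3 p1 by (simp add: abs_mult mult_left_mono)
    ultimately have "zQ (zs_mult s w) \<ge> 4 * p" by linarith
    then show ?thesis using m3p p1 unfolding m_def s_def by linarith
  qed
qed

lemma emb_norm_zQ: "emb_norm u = sqrt (2 * of_int (zQ u))"
proof -
  obtain x y where u: "u = (x,y)" by force
  have r: "sqrt 2 * sqrt 2 = (2::real)" by simp
  have "(of_int x + of_int y * sqrt 2)\<^sup>2 + (of_int x - of_int y * sqrt 2)\<^sup>2
        = 2 * (of_int x)^2 + 2 * (of_int y)^2 * (sqrt 2 * sqrt 2)"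
    by (simp add: power2_eq_square algebra_simps)
  also have "\<dots> = 2 * of_int (zQ u)" unfolding r by (simp add: u zQ_def)
  finally show ?thesis by (simp add: emb_norm_def canon_emb_def u)
qed

lemma sqrt_min: "sqrt (min A B) = min (sqrt A) (sqrt B)"
  by (cases "A \<le> B") (auto simp: min_def)

theorem theorem7:
  fixes p :: int and P :: "zsqrt2 set"
  assumes "prime p"
    and "p mod 8 = 1 \<or> p mod 8 = 7"
    and "zs_prime_ideal P"
    and "lies_over P p"
  shows "lambda1 P = sqrt 2 * min (sqrt (2 * (of_int (a_min p))\<^sup>2 - of_int p))
           (sqrt (6 * (of_int (a_min p))\<^sup>2 - 4 * sqrt 2 * of_int (a_min p)
                    * sqrt ((of_int (a_min p))\<^sup>2 - of_int p) - 3 * of_int p))"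
proof -
  note pr = assms(1)
  have p1: "p > 1" using pr prime_gt_1_int by blast
  have Id: "zs_ideal P" and pri: "\<And>u v. zs_mult u v \<in> P \<Longrightarrow> u \<in> P \<or> v \<in> P"
    using assms(3) by (auto simp: zs_prime_ideal_def)
  have inP: "(n,0) \<in> P \<longleftrightarrow> p dvd n" for n using assms(4) by (auto simp: lies_over_def)
  obtain s where s: "s \<in> P" "zN s = p" "\<forall>u\<in>P. \<exists>w. u = zs_mult s w"
    using gen_norm_p[OF assms] by blast
  obtain sx sy where sxy: "s = (sx,sy)" by force
  have ps: "\<bar>sx\<bar> > 0" "\<bar>sy\<bar> > 0" "\<bar>sx\<bar>^2 - 2 * \<bar>sy\<bar>^2 = p"
    using pos_sol_from_norm[OF pr, of sx sy] s(2) sxy by auto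
  define a where "a = a_min p"
  from a_min_props[OF ps] have a0: "a > 0" and bex: "\<exists>b>0. a^2 - 2*b^2 = p"
    and mn: "\<forall>a' b'. a' > 0 \<longrightarrow> b' > 0 \<longrightarrow> a'^2 - 2*b'^2 = p \<longrightarrow> a \<le> a'"
    unfolding a_def by blast+
  obtain b where b0: "b > 0" and ab: "a^2 - 2*b^2 = p" using bex by blast
  define sg where "sg = (a,b)"
  have Nsg: "zN sg = p" using ab by (simp add: sg_def zN_def)
  have "zs_mult sg (zconj sg) = (p,0)" using Nsg by (simp add: mult_conj)
  then have "zs_mult sg (zconj sg) \<in> P" using inP by simp
  then have "sg \<in> P \<or> zconj sg \<in> P" by (rule pri)
  then obtain t where t: "t \<in> P" "t = sg \<or> t = zconj sg" by blast
  have Nt: "zN t = p" using t(2) Nsg by auto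
  have "\<exists>w0. t = zs_mult s w0" using s(3) t(1) by (rule bspec)
  then obtain w0 where w0: "t = zs_mult s w0" by (elim exE)
  have "p * zN w0 = p" using Nt s(2) by (simp add: w0 zN_mult)
  then have Nw0: "zN w0 = 1" using p1 by simp
  define wi where "wi = zs_mult (zN w0, 0) (zconj w0)"
  have "zs_mult t wi = zs_mult s (zs_mult w0 wi)" by (simp add: w0 zs_mult_assoc)
  also have "\<dots> = s" unfolding wi_def using unit_inverse[of w0] Nw0 by simp
  finally have swi: "s = zs_mult t wi" by simp
  have genP: "\<exists>w. u = zs_mult t w" if "u \<in> P" for u
  proof -
    have "\<exists>v. u = zs_mult s v" using s(3) that by (rule bspec)
    then obtain v where "u = zs_mult s v" by (elim exE)
    then have "u = zs_mult t (zs_mult wi v)" by (simp add: swi zs_mult_assoc)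
    then show ?thesis by blast
  qed
  define m where "m = min (zQ sg) (zQ (zs_mult sg (-1,1)))"
  have lower: "m \<le> zQ (zs_mult t w)" if "w \<noteq> (0,0)" for w
    using t(2)
  proof
    assume "t = sg"
    then show ?thesis using core[OF pr a0 b0 ab mn that] by (simp add: m_def sg_def)
  next
    assume tc: "t = zconj sg"
    have "zconj w \<noteq> (0,0)" using that by simp
    from core[OF pr a0 b0 ab mn this]
    have "m \<le> zQ (zs_mult sg (zconj w))" by (simp add: m_def sg_def)
    also have "zQ (zs_mult sg (zconj w)) = zQ (zs_mult t w)"
    proof -
      have e: "zconj (zs_mult sg (zconj w)) = zs_mult t w" by (simp add: zconj_mult tc)
      have "zQ (zs_mult sg (zconj w)) = zQ (zconj (zs_mult sg (zconj w)))" by (rule zQ_conj[symmetric])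
      then show ?thesis unfolding e .
    qed
    finally show ?thesis .
  qed
  have attain: "\<exists>u\<in>P. u \<noteq> (0,0) \<and> zQ u = m"
  proof -
    have tne: "t \<noteq> (0,0)" using Nt p1 by (auto simp: zN_def)
    have q1: "zQ t = zQ sg" using t(2) by auto
    have "\<exists>w. zQ (zs_mult t w) = zQ (zs_mult sg (-1,1))"
      using t(2)
    proof
      assume "t = sg" then show ?thesis by blast
    next
      assume tc: "t = zconj sg"
      have "zs_mult t (-1,-1) = zconj (zs_mult sg (-1,1))"
        by (simp add: tc zconj_def zs_mult_def)
      then have "zQ (zs_mult t (-1,-1)) = zQ (zs_mult sg (-1,1))" by (simp only: zQ_conj)
      then show ?thesis by blast
    qed
    then obtain w where w: "zQ (zs_mult t w) = zQ (zs_mult sg (-1,1))" by blast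
    have w2: "zs_mult t w \<in> P" using Id t(1) by (rule ideal_mult')
    have "zs_mult sg (-1,1) \<noteq> (0,0)" using Nsg p1 by (auto simp: zs_mult_0_iff zN_def)
    then have "zQ (zs_mult sg (-1,1)) > 0" by (rule zQ_pos)
    then have w3: "zs_mult t w \<noteq> (0,0)" using w by (auto simp: zQ_def)
    show ?thesis
    proof (cases "zQ sg \<le> zQ (zs_mult sg (-1,1))")
      case True then show ?thesis using t(1) tne q1 by (intro bexI[of _ t]) (auto simp: m_def)
    next
      case False then show ?thesis using w2 w3 w by (intro bexI[of _ "zs_mult t w"]) (auto simp: m_def)
    qed
  qed
  have lam: "lambda1 P = sqrt (2 * of_int m)"
    unfolding lambda1_def
  proof (rule cInf_eq_minimum)
    obtain u where "u \<in> P" "u \<noteq> (0,0)" "zQ u = m" using attain by blast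
    then have "sqrt (2 * of_int m) = emb_norm u \<and> u \<in> P \<and> u \<noteq> (0,0)" by (simp add: emb_norm_zQ)
    then show "sqrt (2 * of_int m) \<in> {emb_norm u |u. u \<in> P \<and> u \<noteq> (0, 0)}" by blast
  next
    fix x assume "x \<in> {emb_norm u |u. u \<in> P \<and> u \<noteq> (0, 0)}"
    then obtain u where u: "x = emb_norm u" "u \<in> P" "u \<noteq> (0,0)" by blast
    obtain w where w: "u = zs_mult t w" using genP[OF u(2)] by (elim exE)
    then have "w \<noteq> (0,0)" using u(3) by auto
    then have "m \<le> zQ u" using lower w by simp
    then have "real_of_int m \<le> real_of_int (zQ u)" by simp
    then show "sqrt (2 * of_int m) \<le> x" unfolding u(1) emb_norm_zQ by simp
  qed
  have rb: "sqrt ((of_int a)\<^sup>2 - of_int p) = sqrt 2 * of_int b"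
  proof -
    have "a^2 - p = 2 * b^2" using ab by simp
    then have "real_of_int (a^2 - p) = real_of_int (2 * b^2)" by (rule arg_cong)
    then have "(of_int a)\<^sup>2 - of_int p = (2::real) * (of_int b)^2" by simp
    then show ?thesis using b0 by (simp add: real_sqrt_mult)
  qed
  have Q1: "real_of_int (zQ sg) = 2 * (of_int a)\<^sup>2 - of_int p"
  proof -
    have "zQ sg = 2 * a^2 - p" using ab by (simp add: sg_def zQ_def)
    then show ?thesis by simp
  qed
  have Q2: "real_of_int (zQ (zs_mult sg (-1,1))) = 6 * (of_int a)\<^sup>2 - 4 * sqrt 2 * of_int a
                    * sqrt ((of_int a)\<^sup>2 - of_int p) - 3 * of_int p"
  proof -
    have "zQ (zs_mult sg (-1,1)) = 6 * a^2 - 8 * a * b - 3 * p" using ab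
      by (simp add: sg_def zQ_def zs_mult_def power2_eq_square algebra_simps)
    then have "real_of_int (zQ (zs_mult sg (-1,1))) = 6 * (of_int a)\<^sup>2 - 8 * of_int a * of_int b - 3 * of_int p"
      by simp
    moreover have "4 * sqrt 2 * of_int a * (sqrt 2 * of_int b) = 8 * of_int a * (of_int b :: real)"
    proof -
      have "4 * sqrt 2 * of_int a * (sqrt 2 * of_int b) = 4 * (sqrt 2 * sqrt 2) * of_int a * (of_int b :: real)"
        by (simp add: algebra_simps)
      then show ?thesis by simp
    qed
    ultimately show ?thesis unfolding rb by simp
  qed
  have "lambda1 P = sqrt 2 * sqrt (min (real_of_int (zQ sg)) (real_of_int (zQ (zs_mult sg (-1,1)))))"
    unfolding lam m_def by (simp add: real_sqrt_mult)
  also have "\<dots> = sqrt 2 * min (sqrt (2 * (of_int a)\<^sup>2 - of_int p))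
           (sqrt (6 * (of_int a)\<^sup>2 - 4 * sqrt 2 * of_int a
                    * sqrt ((of_int a)\<^sup>2 - of_int p) - 3 * of_int p))"
    unfolding sqrt_min Q1 Q2 ..
  finally show ?thesis unfolding a_def .
qed

end
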